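(* Let $B_0=\langle a,e,f\mid e^2=e,\ f^2=f,\ ef=fe=0,\ ea=af=a\rangle=\{0,a,e,f\}$. Then (i) the pseudovariety $\llbracket B_0\rrbracket$ is strictly join irreducible; (ii) $\llbracket B_0\rrbracket$ is not join irreducible; (iii) $\llbracket B_0^I\rrbracket$ is not strictly join irreducible.
   Context: $B_0$ is the four-element semigroup with zero $0$ given by the presentation (all products not determined by the relations are $0$). $B_0^I$ is $B_0$ with an external identity adjoined. A pseudovariety is a class of finite semigroups closed under finite direct products, subsemigroups and homomorphic images; $\llbracket S\rrbracket$ is the pseudovariety generated by $S$. In the lattice of pseudovarieties, $\mathbf{V}$ is join irreducible if $\mathbf{V}\subseteq\bigvee\mathscr{X}$ implies $\mathbf{V}\subseteq\mathbf{X}$ for some $\mathbf{X}\in\mathscr{X}$, and strictly join irreducible if $\mathbf{V}=\bigvee\mathscr{X}$ implies $\mathbf{V}\in\mathscr{X}$ (for every set $\mathscr{X}$ of pseudovarieties). *)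

theory Defs
  imports Main
begin

text \<open>Pseudovarieties are classes of finite semigroups; we represent them as sets of
  semigroups whose carrier lies in nat (every finite semigroup has an isomorphic copy
  there), closed under isomorphic copies, subsemigroups, finite direct products and
  homomorphic images.\<close>

type_synonym 'a sgrp = "'a set \<times> ('a \<Rightarrow> 'a \<Rightarrow> 'a)"

definition semigroup_on :: "'a sgrp \<Rightarrow> bool" where
  "semigroup_on S \<longleftrightarrow> fst S \<noteq> {} \<and>
     (\<forall>x\<in>fst S. \<forall>y\<in>fst S. snd S x y \<in> fst S) \<and>
     (\<forall>x\<in>fst S. \<forall>y\<in>fst S. \<forall>z\<in>fst S. snd S (snd S x y) z = snd S x (snd S y z))"

definition finite_sg :: "'a sgrp \<Rightarrow> bool" where
  "finite_sg S \<longleftrightarrow> semigroup_on S \<and> finite (fst S)"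

definition sg_hom :: "'a sgrp \<Rightarrow> 'b sgrp \<Rightarrow> ('a \<Rightarrow> 'b) \<Rightarrow> bool" where
  "sg_hom S T h \<longleftrightarrow> h ` fst S \<subseteq> fst T \<and>
     (\<forall>x\<in>fst S. \<forall>y\<in>fst S. h (snd S x y) = snd T (h x) (h y))"

definition sg_prod :: "'a sgrp \<Rightarrow> 'b sgrp \<Rightarrow> ('a \<times> 'b) sgrp" where
  "sg_prod S T = (fst S \<times> fst T,
     \<lambda>p q. (snd S (fst p) (fst q), snd T (snd p) (snd q)))"

text \<open>Closure under (isomorphic copies of) subsemigroups of binary direct products
  together with nonemptiness gives closure under isomorphism, subsemigroups and all
  finite direct products (the empty product, the trivial semigroup, arises as a
  homomorphic image).\<close>
definition pseudovariety :: "nat sgrp set \<Rightarrow> bool" where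
  "pseudovariety V \<longleftrightarrow> V \<noteq> {} \<and> (\<forall>S\<in>V. finite_sg S) \<and>
     (\<forall>S\<in>V. \<forall>T\<in>V. \<forall>U. finite_sg U \<and>
        (\<exists>h. sg_hom U (sg_prod S T) h \<and> inj_on h (fst U)) \<longrightarrow> U \<in> V) \<and>
     (\<forall>S\<in>V. \<forall>T. finite_sg T \<and> (\<exists>h. sg_hom S T h \<and> h ` fst S = fst T) \<longrightarrow> T \<in> V)"

definition pv_gen :: "nat sgrp \<Rightarrow> nat sgrp set" where
  "pv_gen S = \<Inter>{V. pseudovariety V \<and> S \<in> V}"

definition pv_join :: "nat sgrp set set \<Rightarrow> nat sgrp set" where
  "pv_join X = \<Inter>{W. pseudovariety W \<and> \<Union>X \<subseteq> W}"

definition join_irreducible :: "nat sgrp set \<Rightarrow> bool" where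
  "join_irreducible V \<longleftrightarrow> (\<forall>X. (\<forall>W\<in>X. pseudovariety W) \<longrightarrow>
      V \<subseteq> pv_join X \<longrightarrow> (\<exists>W\<in>X. V \<subseteq> W))"

definition strictly_join_irreducible :: "nat sgrp set \<Rightarrow> bool" where
  "strictly_join_irreducible V \<longleftrightarrow> (\<forall>X. (\<forall>W\<in>X. pseudovariety W) \<longrightarrow>
      V = pv_join X \<longrightarrow> V \<in> X)"

text \<open>B0 = {0,a,e,f} encoded as 0,1,2,3 (0 = zero, 1 = a, 2 = e, 3 = f):
  e e = e, f f = f, e a = a, a f = a, all other products 0.\<close>
definition B0_mult :: "nat \<Rightarrow> nat \<Rightarrow> nat" where
  "B0_mult x y = (if x = 2 \<and> y = 2 then 2
                  else if x = 3 \<and> y = 3 then 3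
                  else if x = 2 \<and> y = 1 then 1
                  else if x = 1 \<and> y = 3 then 1
                  else 0)"

definition B0 :: "nat sgrp" where
  "B0 = ({0, 1, 2, 3}, B0_mult)"

text \<open>B0^I: B0 with an external identity adjoined, encoded as 4.\<close>
definition B0I :: "nat sgrp" where
  "B0I = ({0, 1, 2, 3, 4}, \<lambda>x y. if x = 4 then y else if y = 4 then x else B0_mult x y)"

end

theory Submission
  imports Defs
begin

datatype tm = V nat | Mu tm tm

fun ev :: "('a \<Rightarrow> 'a \<Rightarrow> 'a) \<Rightarrow> (nat \<Rightarrow> 'a) \<Rightarrow> tm \<Rightarrow> 'a" where
  "ev m r (V i) = r i"
| "ev m r (Mu s t) = m (ev m r s) (ev m r t)"

definition sat :: "'a sgrp \<Rightarrow> tm \<times> tm \<Rightarrow> bool" where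
  "sat S e \<longleftrightarrow> (\<forall>r. (\<forall>i. r i \<in> fst S) \<longrightarrow> ev (snd S) r (fst e) = ev (snd S) r (snd e))"

definition modl :: "(tm \<times> tm) set \<Rightarrow> nat sgrp set" where
  "modl E = {S. finite_sg S \<and> (\<forall>e\<in>E. sat S e)}"

lemma ev_in: assumes "\<forall>x\<in>fst S. \<forall>y\<in>fst S. snd S x y \<in> fst S" "\<forall>i. r i \<in> fst S"
  shows "ev (snd S) r t \<in> fst S"
  using assms by (induction t) auto

lemma ev_hom: assumes "sg_hom S T h" "\<forall>x\<in>fst S. \<forall>y\<in>fst S. snd S x y \<in> fst S" "\<forall>i. r i \<in> fst S"
  shows "h (ev (snd S) r t) = ev (snd T) (h \<circ> r) t"
  using assms proof (induction t)
  case (V i) then show ?case by simp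
next
  case (Mu s t)
  have "ev (snd S) r s \<in> fst S" "ev (snd S) r t \<in> fst S" using ev_in Mu.prems by blast+
  then show ?case using Mu by (simp add: sg_hom_def)
qed

lemma ev_prod: "ev (snd (sg_prod S T)) r t = (ev (snd S) (fst \<circ> r) t, ev (snd T) (snd \<circ> r) t)"
  by (induction t) (auto simp: sg_prod_def)

lemma sat_prod: assumes "sat S e" "sat T e" shows "sat (sg_prod S T) e"
  unfolding sat_def
proof (intro allI impI)
  fix r :: "nat \<Rightarrow> _" assume r: "\<forall>i. r i \<in> fst (sg_prod S T)"
  have "\<forall>i. (fst \<circ> r) i \<in> fst S" "\<forall>i. (snd \<circ> r) i \<in> fst T" using r by (auto simp: sg_prod_def mem_Times_iff)
  then show "ev (snd (sg_prod S T)) r (fst e) = ev (snd (sg_prod S T)) r (snd e)"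
    using assms unfolding sat_def ev_prod by simp
qed

lemma sat_sub: assumes "semigroup_on U" "sg_hom U P h" "inj_on h (fst U)" "sat P e"
  shows "sat U e"
  unfolding sat_def
proof (intro allI impI)
  fix r :: "nat \<Rightarrow> _" assume r: "\<forall>i. r i \<in> fst U"
  have cl: "\<forall>x\<in>fst U. \<forall>y\<in>fst U. snd U x y \<in> fst U" using assms(1) by (simp add: semigroup_on_def)
  have hr: "\<forall>i. (h \<circ> r) i \<in> fst P" using r assms(2) by (auto simp: sg_hom_def)
  have "h (ev (snd U) r (fst e)) = h (ev (snd U) r (snd e))"
    using ev_hom[OF assms(2) cl r] assms(4) hr unfolding sat_def by simp
  moreover have "ev (snd U) r (fst e) \<in> fst U" "ev (snd U) r (snd e) \<in> fst U" using ev_in[OF cl r] by auto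
  ultimately show "ev (snd U) r (fst e) = ev (snd U) r (snd e)" using assms(3) by (meson inj_onD)
qed

lemma sat_img: assumes "semigroup_on S" "sg_hom S T h" "h ` fst S = fst T" "sat S e" shows "sat T e"
  unfolding sat_def
proof (intro allI impI)
  fix r :: "nat \<Rightarrow> _" assume r: "\<forall>i. r i \<in> fst T"
  define r' where "r' i = (SOME s. s \<in> fst S \<and> h s = r i)" for i
  have r': "r' i \<in> fst S \<and> h (r' i) = r i" for i
  proof -
    have "r i \<in> h ` fst S" using r assms(3) by auto
    then have "\<exists>s. s \<in> fst S \<and> h s = r i" by auto
    then show ?thesis unfolding r'_def by (rule someI_ex)
  qed
  have hr: "h \<circ> r' = r" using r' by auto
  have cl: "\<forall>x\<in>fst S. \<forall>y\<in>fst S. snd S x y \<in> fst S" using assms(1) by (simp add: semigroup_on_def)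
  have rr: "\<forall>i. r' i \<in> fst S" using r' by auto
  show "ev (snd T) r (fst e) = ev (snd T) r (snd e)"
    using ev_hom[OF assms(2) cl rr, symmetric] assms(4) rr unfolding sat_def hr by metis
qed

lemma triv_in: "({0::nat}, \<lambda>x y. 0) \<in> modl E"
proof -
  let ?S = "({0::nat}, \<lambda>x y::nat. 0::nat) :: nat sgrp"
  have "sat ?S e" for e
    unfolding sat_def
  proof (intro allI impI)
    fix r :: "nat \<Rightarrow> _" assume r: "\<forall>i. r i \<in> fst ?S"
    have cl: "\<forall>x\<in>fst ?S. \<forall>y\<in>fst ?S. snd ?S x y \<in> fst ?S" by simp
    show "ev (snd ?S) r (fst e) = ev (snd ?S) r (snd e)"
      using ev_in[OF cl r, of "fst e"] ev_in[OF cl r, of "snd e"] by simp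
  qed
  then show ?thesis by (simp add: modl_def finite_sg_def semigroup_on_def)
qed

lemma modl_pv: "pseudovariety (modl E)"
  unfolding pseudovariety_def
proof (intro conjI ballI allI impI)
  show "modl E \<noteq> {}" using triv_in by blast
next
  fix S assume "S \<in> modl E" then show "finite_sg S" by (simp add: modl_def)
next
  fix S T U :: "nat sgrp" assume S: "S \<in> modl E" and T: "T \<in> modl E"
    and U: "finite_sg U \<and> (\<exists>h. sg_hom U (sg_prod S T) h \<and> inj_on h (fst U))"
  then obtain h where h: "sg_hom U (sg_prod S T) h" "inj_on h (fst U)" by blast
  have "sat U e" if "e \<in> E" for e
    using sat_sub[OF _ h sat_prod] S T U that by (auto simp: modl_def finite_sg_def)
  then show "U \<in> modl E" using U by (simp add: modl_def)
next
  fix S T :: "nat sgrp" assume S: "S \<in> modl E" and T: "finite_sg T \<and> (\<exists>h. sg_hom S T h \<and> h ` fst S = fst T)"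
  then obtain h where h: "sg_hom S T h" "h ` fst S = fst T" by blast
  have "sat T e" if "e \<in> E" for e
    using sat_img[OF _ h] S that by (auto simp: modl_def finite_sg_def)
  then show "T \<in> modl E" using T by (simp add: modl_def)
qed

fun wd :: "nat list \<Rightarrow> tm" where
  "wd [] = V 0"
| "wd [i] = V i"
| "wd (i # j # k) = Mu (V i) (wd (j # k))"

definition sqi :: "nat list \<Rightarrow> tm \<times> tm" where
  "sqi w = (Mu (wd w) (wd w), wd w)"

fun vars :: "tm \<Rightarrow> nat set" where
  "vars (V i) = {i}"
| "vars (Mu s t) = vars s \<union> vars t"

definition f4 :: "'a \<Rightarrow> 'a \<Rightarrow> 'a \<Rightarrow> 'a \<Rightarrow> nat \<Rightarrow> 'a" where
  "f4 a b c d i = (if i = 0 then a else if i = 1 then b else if i = 2 then c else d)"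

lemma ev_cong: "\<forall>i\<in>vars t. r i = r' i \<Longrightarrow> ev m r t = ev m r' t"
  by (induction t) auto

lemma vars_wd: "vars (wd w) \<subseteq> set w \<union> {0}"
  by (induction w rule: wd.induct) auto

lemma sat_crit:
  assumes "vars l \<subseteq> {0..3}" "vars r \<subseteq> {0..3}"
    "\<forall>a\<in>fst S. \<forall>b\<in>fst S. \<forall>c\<in>fst S. \<forall>d\<in>fst S. ev (snd S) (f4 a b c d) l = ev (snd S) (f4 a b c d) r"
  shows "sat S (l, r)"
  unfolding sat_def
proof (intro allI impI)
  fix \<rho> :: "nat \<Rightarrow> _" assume \<rho>: "\<forall>i. \<rho> i \<in> fst S"
  let ?r = "f4 (\<rho> 0) (\<rho> 1) (\<rho> 2) (\<rho> 3)"
  have eq: "?r i = \<rho> i" if "i \<le> 3" for i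
  proof -
    have "i = 0 \<or> i = 1 \<or> i = 2 \<or> i = 3" using that by arith
    then show ?thesis unfolding f4_def by auto
  qed
  have "ev (snd S) \<rho> l = ev (snd S) ?r l"
    by (rule ev_cong) (use assms(1) eq in \<open>auto\<close>)
  also have "\<dots> = ev (snd S) ?r r" using assms(3) \<rho> by blast
  also have "\<dots> = ev (snd S) \<rho> r"
    by (rule ev_cong[symmetric]) (use assms(2) eq in \<open>auto\<close>)
  finally show "ev (snd S) \<rho> (fst (l, r)) = ev (snd S) \<rho> (snd (l, r))" by simp
qed

lemma sat_use:
  assumes "sat (C, m) (l, r)" "a \<in> C" "b \<in> C" "c \<in> C" "d \<in> C"
  shows "ev m (f4 a b c d) l = ev m (f4 a b c d) r"
proof -
  have "\<forall>i. f4 a b c d i \<in> C" using assms(2-5) by (simp add: f4_def)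
  then show ?thesis using assms(1) unfolding sat_def by auto
qed

definition Ebig :: "(tm \<times> tm) set" where
  "Ebig = {(wd [0,0,0,0], wd [0,0]), (wd [0,0,2,2], wd [2,2,0,0]),
           sqi [2,2,1,2,2], sqi [0,0,2,2,1,2,2],
           (wd [0,0,1,0,0,2,2,3,0,0], wd [0,0,1,0,0,2,2,3,0,0,2,2]),
           (wd [2,2,1,0,0,2,2,3,2,2], wd [2,2,1,0,0,2,2,3,2,2,0,0]),
           sqi [0,0,1,0,0,2,2], sqi [0,0,1,0,0,2,2,3,2,2]}"

definition E0 :: "tm \<times> tm" where "E0 = sqi [0,0,1,2,2]"


lemma B0m: "B0_mult 0 y = 0" "B0_mult x 0 = 0" "B0_mult 1 1 = 0" "B0_mult 1 2 = 0" "B0_mult 1 3 = 1"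
  "B0_mult 2 1 = 1" "B0_mult 2 2 = 2" "B0_mult 2 3 = 0" "B0_mult 3 1 = 0" "B0_mult 3 2 = 0" "B0_mult 3 3 = 3"
  "B0_mult (Suc 0) (Suc 0) = 0" "B0_mult (Suc 0) 2 = 0" "B0_mult (Suc 0) 3 = Suc 0" "B0_mult 2 (Suc 0) = Suc 0" "B0_mult 3 (Suc 0) = 0"
  by (simp_all add: B0_mult_def)

lemma B0_fsg: "finite_sg B0"
  unfolding finite_sg_def semigroup_on_def B0_def by (simp add: B0m)

lemma B0_Ebig: "B0 \<in> modl Ebig"
proof -
  have "sat B0 e" if "e \<in> Ebig" for e
    using that unfolding Ebig_def sqi_def
    by (auto intro!: sat_crit simp: B0_def f4_def B0m)
  then show ?thesis using B0_fsg by (simp add: modl_def)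
qed

lemma key:
  fixes C :: "nat set" and m :: "nat \<Rightarrow> nat \<Rightarrow> nat"
  assumes cl: "\<And>x y. x\<in>C \<Longrightarrow> y\<in>C \<Longrightarrow> m x y \<in> C"
    and as: "\<And>x y z. x\<in>C \<Longrightarrow> y\<in>C \<Longrightarrow> z\<in>C \<Longrightarrow> m (m x y) z = m x (m y z)"
    and fin: "finite C"
    and W: "pseudovariety W" "(C, m) \<in> W"
    and eC: "e \<in> C" and fC: "f \<in> C" and yC: "y0 \<in> C"
    and wdef: "w = m e (m y0 f)"
    and ee: "m e e = e" and ff: "m f f = f" and comm: "m f e = m e f"
    and I3: "\<And>y. y \<in> C \<Longrightarrow> m (m f (m y f)) (m f (m y f)) = m f (m y f)"
    and I4: "\<And>y. y \<in> C \<Longrightarrow> m (m e (m f (m y f))) (m e (m f (m y f))) = m e (m f (m y f))"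
    and I5: "\<And>a b. a \<in> C \<Longrightarrow> b \<in> C \<Longrightarrow>
               m e (m a (m e (m f (m b e)))) = m e (m a (m e (m f (m b (m e f)))))"
    and I5b: "\<And>a b. a \<in> C \<Longrightarrow> b \<in> C \<Longrightarrow>
               m f (m a (m e (m f (m b f)))) = m f (m a (m e (m f (m b (m f e)))))"
    and I6: "\<And>y. y \<in> C \<Longrightarrow> m (m e (m y (m e f))) (m e (m y (m e f))) = m e (m y (m e f))"
    and I7: "\<And>a b. a \<in> C \<Longrightarrow> b \<in> C \<Longrightarrow>
               m (m e (m a (m e (m f (m b f))))) (m e (m a (m e (m f (m b f))))) = m e (m a (m e (m f (m b f))))"
    and nE0: "m w w \<noteq> w"
  shows "B0 \<in> W"
proof -
  have ee': "m e (m e t) = m e t" if "t \<in> C" for t using as[OF eC eC that] ee by simp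
  have ff': "m f (m f t) = m f t" if "t \<in> C" for t using as[OF fC fC that] ff by simp
  have comm': "m f (m e t) = m e (m f t)" if "t \<in> C" for t
    using as[OF fC eC that] as[OF eC fC that] comm by simp
  note simps = as cl eC fC yC ee ff comm ee' ff' comm'
  have wC: "w \<in> C" using wdef by (simp add: cl eC fC yC)
  define g where "g = m e f"
  have gC: "g \<in> C" unfolding g_def by (simp add: cl eC fC)
  define I where "I = {m a (m g b) | a b. a \<in> C \<and> b \<in> C}"
  have IC: "I \<subseteq> C" unfolding I_def using gC cl by auto
  have gI: "g \<in> I" unfolding I_def
  proof (intro CollectI exI conjI)
    show "g = m e (m g e)" unfolding g_def by (simp add: simps)
  qed (auto simp: eC)
  have Il: "m u v \<in> I" if uI: "u \<in> I" and vC: "v \<in> C" for u v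
  proof -
    obtain a b where ab: "u = m a (m g b)" "a \<in> C" "b \<in> C" using uI unfolding I_def by blast
    have "m u v = m a (m g (m b v))" using ab vC gC by (simp add: as cl)
    then show ?thesis unfolding I_def using ab vC cl by blast
  qed
  have Ir: "m v u \<in> I" if uI: "u \<in> I" and vC: "v \<in> C" for u v
  proof -
    obtain a b where ab: "u = m a (m g b)" "a \<in> C" "b \<in> C" using uI unfolding I_def by blast
    have "m v u = m (m v a) (m g b)" using ab vC gC by (simp add: as cl)
    then show ?thesis unfolding I_def using ab vC cl by blast
  qed
  have efI: "m e f \<in> I" using gI g_def by simp
  have feI: "m f e \<in> I" using gI g_def comm by simp
  have fwI: "m f w \<in> I" unfolding I_def
  proof (intro CollectI exI conjI)
    show "m f w = m e (m g (m y0 f))" unfolding g_def wdef by (simp add: simps)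
  qed (auto simp: eC cl yC fC)
  have weI: "m w e \<in> I" unfolding I_def
  proof (intro CollectI exI conjI)
    show "m w e = m (m e y0) (m g e)" unfolding g_def wdef by (simp add: simps)
  qed (auto simp: eC cl yC fC)
  have wwI: "m w w \<in> I" unfolding I_def
  proof (intro CollectI exI conjI)
    show "m w w = m (m e y0) (m g (m y0 f))" unfolding g_def wdef by (simp add: simps)
  qed (auto simp: eC cl yC fC)
  have ew: "m e w = w" unfolding wdef by (simp add: simps)
  have wf: "m w f = w" unfolding wdef by (simp add: simps)
  have eI: "e \<notin> I"
  proof
    assume "e \<in> I"
    then obtain a b where ab: "e = m a (m g b)" "a \<in> C" "b \<in> C" unfolding I_def by blast
    have "m e (m a (m e (m f (m b e)))) = m e (m (m a (m (m e f) b)) e)"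
      using ab(2,3) by (simp add: simps)
    also have "\<dots> = e" using ab(1) ee g_def by simp
    finally have h1: "m e (m a (m e (m f (m b e)))) = e" .
    have "m e f = m (m e (m a (m e (m f (m b e))))) f" using h1 by simp
    also have "\<dots> = m e (m a (m e (m f (m b (m e f)))))" using ab(2,3) by (simp add: simps)
    also have "\<dots> = e" using I5[OF ab(2,3)] h1 by simp
    finally have efe: "m e f = e" .
    have "w = m (m e f) (m y0 f)" unfolding wdef using efe by simp
    also have "\<dots> = m e (m f (m y0 f))" by (simp add: simps)
    finally have "w = m e (m f (m y0 f))" .
    then show False using I4[OF yC] nE0 by simp
  qed
  have fI: "f \<notin> I"
  proof
    assume "f \<in> I"
    then obtain a b where ab: "f = m a (m g b)" "a \<in> C" "b \<in> C" unfolding I_def by blast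
    have "m f (m a (m e (m f (m b f)))) = m f (m (m a (m (m e f) b)) f)"
      using ab(2,3) by (simp add: as cl eC fC)
    also have "\<dots> = f" using ab(1) ff g_def by simp
    finally have h1: "m f (m a (m e (m f (m b f)))) = f" .
    have "m f e = m (m f (m a (m e (m f (m b f))))) e" using h1 by simp
    also have "\<dots> = m f (m a (m e (m f (m b (m f e)))))" using ab(2,3) by (simp add: as cl eC fC)
    also have "\<dots> = f" using I5b[OF ab(2,3)] h1 by simp
    finally have fef: "m e f = f" using comm by simp
    have "w = m e (m y0 (m e f))" unfolding wdef using fef by simp
    then show False using I6[OF yC] nE0 by simp
  qed
  have wI: "w \<notin> I"
  proof
    assume "w \<in> I"
    then obtain a b where ab: "w = m a (m g b)" "a \<in> C" "b \<in> C" unfolding I_def by blast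
    have "w = m e (m w f)" using ew wf wC by (simp add: as eC fC)
    also have "\<dots> = m e (m (m a (m (m e f) b)) f)" using ab(1) g_def by simp
    also have "\<dots> = m e (m a (m e (m f (m b f))))" using ab(2,3) by (simp add: as cl eC fC)
    finally have "w = m e (m a (m e (m f (m b f))))" .
    then show False using I7[OF ab(2,3)] nE0 by simp
  qed
  have ef_ne: "e \<noteq> f"
  proof
    assume "e = f"
    then have "w = m f (m y0 f)" using wdef by simp
    then show False using I3[OF yC] nE0 by simp
  qed
  have ew_ne: "e \<noteq> w" using ee nE0 by auto
  have fw_ne: "f \<noteq> w" using ff nE0 by auto
  define U where "U = {e, f, w} \<union> I"
  have UC: "U \<subseteq> C" using IC eC fC wC U_def by auto
  define \<phi> where "\<phi> u = (if u = e then 2 else if u = w then 1 else if u = f then 3 else (0::nat))" for u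
  have \<phi>I: "\<phi> u = 0" if "u \<in> I" for u using that eI fI wI unfolding \<phi>_def by auto
  have \<phi>e: "\<phi> e = 2" and \<phi>f: "\<phi> f = 3" and \<phi>w: "\<phi> w = 1"
    using ef_ne ew_ne fw_ne unfolding \<phi>_def by auto
  have Ucl: "m u v \<in> U \<and> \<phi> (m u v) = B0_mult (\<phi> u) (\<phi> v)" if "u \<in> U" "v \<in> U" for u v
  proof (cases "u \<in> I \<or> v \<in> I")
    case True
    then have "m u v \<in> I" using Il Ir that UC by blast
    then show ?thesis using True \<phi>I U_def by (auto simp: B0_mult_def)
  next
    case False
    then have "u \<in> {e, f, w}" "v \<in> {e, f, w}" using that U_def by auto
    then show ?thesis using efI feI fwI weI wwI ew wf ee ff \<phi>I \<phi>e \<phi>f \<phi>w U_def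
      by (auto simp: B0_mult_def)
  qed
  have Ufsg: "finite_sg (U, m)"
    unfolding finite_sg_def semigroup_on_def using Ucl UC fin U_def
    by (auto intro: finite_subset simp: as subset_iff)
  have hom1: "sg_hom (U, m) (sg_prod (C, m) (C, m)) (\<lambda>u. (u, u))"
    unfolding sg_hom_def sg_prod_def using UC by auto
  have inj1: "inj_on (\<lambda>u. (u, u)) (fst (U, m))" by (auto simp: inj_on_def)
  have UW: "(U, m) \<in> W" using W Ufsg hom1 inj1 unfolding pseudovariety_def by blast
  have hom2: "sg_hom (U, m) B0 \<phi>"
    unfolding sg_hom_def B0_def using Ucl \<phi>_def by auto
  have "\<phi> g = 0" using \<phi>I gI by simp
  then have img: "\<phi> ` fst (U, m) = fst B0"
    using \<phi>e \<phi>f \<phi>w gI hom2 unfolding U_def B0_def sg_hom_def by (auto simp: image_iff)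
  show ?thesis using W UW hom2 img B0_fsg unfolding pseudovariety_def by blast
qed


lemma crucial:
  assumes T: "T \<in> modl Ebig" "T \<in> W" "pseudovariety W" "T \<notin> modl {E0}"
  shows "B0 \<in> W"
proof -
  obtain C m where Tcm: "T = (C, m)" by (cases T)
  have fsg: "finite_sg (C, m)" using T(1) Tcm by (simp add: modl_def)
  have cl: "\<And>x y. x\<in>C \<Longrightarrow> y\<in>C \<Longrightarrow> m x y \<in> C" using fsg by (simp add: finite_sg_def semigroup_on_def)
  have as: "\<And>x y z. x\<in>C \<Longrightarrow> y\<in>C \<Longrightarrow> z\<in>C \<Longrightarrow> m (m x y) z = m x (m y z)"
    using fsg by (simp add: finite_sg_def semigroup_on_def)
  have fin: "finite C" using fsg by (simp add: finite_sg_def)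
  have sE: "sat (C, m) e" if "e \<in> Ebig" for e using T(1) Tcm that by (simp add: modl_def)
  have s1: "sat (C, m) (wd [0,0,0,0], wd [0,0])" by (rule sE) (simp add: Ebig_def)
  have s2: "sat (C, m) (wd [0,0,2,2], wd [2,2,0,0])" by (rule sE) (simp add: Ebig_def)
  have s3: "sat (C, m) (sqi [2,2,1,2,2])" by (rule sE) (simp add: Ebig_def)
  have s4: "sat (C, m) (sqi [0,0,2,2,1,2,2])" by (rule sE) (simp add: Ebig_def)
  have s5: "sat (C, m) (wd [0,0,1,0,0,2,2,3,0,0], wd [0,0,1,0,0,2,2,3,0,0,2,2])" by (rule sE) (simp add: Ebig_def)
  have s5b: "sat (C, m) (wd [2,2,1,0,0,2,2,3,2,2], wd [2,2,1,0,0,2,2,3,2,2,0,0])" by (rule sE) (simp add: Ebig_def)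
  have s6: "sat (C, m) (sqi [0,0,1,0,0,2,2])" by (rule sE) (simp add: Ebig_def)
  have s7: "sat (C, m) (sqi [0,0,1,0,0,2,2,3,2,2])" by (rule sE) (simp add: Ebig_def)
  have "\<not> sat (C, m) E0" using T(4) fsg Tcm by (simp add: modl_def)
  then obtain \<rho> where \<rho>: "\<forall>i. \<rho> i \<in> C" and neq: "ev m \<rho> (fst E0) \<noteq> ev m \<rho> (snd E0)"
    unfolding sat_def by auto
  define x0 where "x0 = \<rho> 0"
  define y0 where "y0 = \<rho> 1"
  define z0 where "z0 = \<rho> 2"
  have x0C: "x0 \<in> C" and y0C: "y0 \<in> C" and z0C: "z0 \<in> C" using \<rho> x0_def y0_def z0_def by auto
  note S = as cl x0C y0C z0C
  have nE0: "m (m (m x0 x0) (m y0 (m z0 z0))) (m (m x0 x0) (m y0 (m z0 z0))) \<noteq> m (m x0 x0) (m y0 (m z0 z0))"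
    using neq unfolding E0_def sqi_def x0_def y0_def z0_def by (simp add: S[unfolded x0_def y0_def z0_def] \<rho>)
  show ?thesis
  proof (rule key[OF cl as fin T(3) T(2)[unfolded Tcm], of "m x0 x0" "m z0 z0" y0 "m (m x0 x0) (m y0 (m z0 z0))"])
    show "m x0 x0 \<in> C" "m z0 z0 \<in> C" "y0 \<in> C" using S by auto
    show "m (m x0 x0) (m y0 (m z0 z0)) = m (m x0 x0) (m y0 (m z0 z0))" ..
    show "m (m x0 x0) (m x0 x0) = m x0 x0"
      using sat_use[OF s1 x0C x0C x0C x0C] by (simp add: f4_def S)
    show "m (m z0 z0) (m z0 z0) = m z0 z0"
      using sat_use[OF s1 z0C z0C z0C z0C] by (simp add: f4_def S)
    show "m (m z0 z0) (m x0 x0) = m (m x0 x0) (m z0 z0)"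
      using sat_use[OF s2 x0C x0C z0C x0C] by (simp add: f4_def S)
    show "m (m (m z0 z0) (m y (m z0 z0))) (m (m z0 z0) (m y (m z0 z0))) = m (m z0 z0) (m y (m z0 z0))"
      if "y \<in> C" for y
      using sat_use[OF s3[unfolded sqi_def] x0C that z0C x0C] that by (simp add: f4_def S sqi_def)
    show "m (m (m x0 x0) (m (m z0 z0) (m y (m z0 z0)))) (m (m x0 x0) (m (m z0 z0) (m y (m z0 z0)))) =
          m (m x0 x0) (m (m z0 z0) (m y (m z0 z0)))" if "y \<in> C" for y
      using sat_use[OF s4[unfolded sqi_def] x0C that z0C x0C] that by (simp add: f4_def S sqi_def)
    show "m (m x0 x0) (m a (m (m x0 x0) (m (m z0 z0) (m b (m x0 x0))))) =
          m (m x0 x0) (m a (m (m x0 x0) (m (m z0 z0) (m b (m (m x0 x0) (m z0 z0))))))"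
      if "a \<in> C" "b \<in> C" for a b
      using sat_use[OF s5 x0C that(1) z0C that(2)] that by (simp add: f4_def S)
    show "m (m z0 z0) (m a (m (m x0 x0) (m (m z0 z0) (m b (m z0 z0))))) =
          m (m z0 z0) (m a (m (m x0 x0) (m (m z0 z0) (m b (m (m z0 z0) (m x0 x0))))))"
      if "a \<in> C" "b \<in> C" for a b
      using sat_use[OF s5b x0C that(1) z0C that(2)] that by (simp add: f4_def S)
    show "m (m (m x0 x0) (m y (m (m x0 x0) (m z0 z0)))) (m (m x0 x0) (m y (m (m x0 x0) (m z0 z0)))) =
          m (m x0 x0) (m y (m (m x0 x0) (m z0 z0)))" if "y \<in> C" for y
      using sat_use[OF s6[unfolded sqi_def] x0C that z0C x0C] that by (simp add: f4_def S sqi_def)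
    show "m (m (m x0 x0) (m a (m (m x0 x0) (m (m z0 z0) (m b (m z0 z0))))))
            (m (m x0 x0) (m a (m (m x0 x0) (m (m z0 z0) (m b (m z0 z0)))))) =
          m (m x0 x0) (m a (m (m x0 x0) (m (m z0 z0) (m b (m z0 z0)))))"
      if "a \<in> C" "b \<in> C" for a b
      using sat_use[OF s7[unfolded sqi_def] x0C that(1) z0C that(2)] that by (simp add: f4_def S sqi_def)
    show "m (m (m x0 x0) (m y0 (m z0 z0))) (m (m x0 x0) (m y0 (m z0 z0))) \<noteq> m (m x0 x0) (m y0 (m z0 z0))"
      by (rule nE0)
  qed
qed


lemma pv_gen_least: "pseudovariety Q \<Longrightarrow> S \<in> Q \<Longrightarrow> pv_gen S \<subseteq> Q"
  unfolding pv_gen_def by blast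

lemma in_pv_gen: "S \<in> pv_gen S"
  unfolding pv_gen_def by blast

lemma join_upper: "W \<in> X \<Longrightarrow> W \<subseteq> pv_join X"
  unfolding pv_join_def by blast

lemma join_least: "pseudovariety Q \<Longrightarrow> \<Union>X \<subseteq> Q \<Longrightarrow> pv_join X \<subseteq> Q"
  unfolding pv_join_def by blast

lemma B0_not_E0: "B0 \<notin> modl {E0}"
proof
  assume "B0 \<in> modl {E0}"
  then have "sat ({0,1,2,3}, B0_mult) (Mu (wd [0,0,1,2,2]) (wd [0,0,1,2,2]), wd [0,0,1,2,2])"
    by (simp add: modl_def E0_def sqi_def B0_def)
  from sat_use[OF this, of 2 1 3 0] show False by (simp add: f4_def B0m)
qed

lemma part1: "strictly_join_irreducible (pv_gen B0)"
  unfolding strictly_join_irreducible_def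
proof (intro allI impI)
  fix X assume pvX: "\<forall>W\<in>X. pseudovariety W" and eq: "pv_gen B0 = pv_join X"
  show "pv_gen B0 \<in> X"
  proof (rule ccontr)
    assume nX: "pv_gen B0 \<notin> X"
    have noB0: "B0 \<notin> W" if "W \<in> X" for W
    proof
      assume "B0 \<in> W"
      then have "pv_gen B0 \<subseteq> W" using pv_gen_least pvX that by blast
      moreover have "W \<subseteq> pv_gen B0" using join_upper[OF that] eq by simp
      ultimately have "W = pv_gen B0" by blast
      then show False using nX that by simp
    qed
    have genE: "pv_gen B0 \<subseteq> modl Ebig" by (rule pv_gen_least[OF modl_pv B0_Ebig])
    have "W \<subseteq> modl {E0}" if "W \<in> X" for W
    proof
      fix T assume TW: "T \<in> W"
      have "T \<in> modl Ebig" using genE join_upper[OF that] eq TW by blast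
      show "T \<in> modl {E0}"
      proof (rule ccontr)
        assume "T \<notin> modl {E0}"
        then have "B0 \<in> W" using crucial \<open>T \<in> modl Ebig\<close> TW pvX that by blast
        then show False using noB0 that by blast
      qed
    qed
    then have "pv_join X \<subseteq> modl {E0}" using join_least[OF modl_pv] by blast
    then show False using B0_not_E0 in_pv_gen[of B0] eq by blast
  qed
qed



definition T1I :: "nat sgrp" where "T1I = ({0, 1, 2, 4}, snd B0I)"
definition T2I :: "nat sgrp" where "T2I = ({0, 1, 3, 4}, snd B0I)"

lemma bI: "snd B0I x y = (if x = 4 then y else if y = 4 then x else B0_mult x y)"
  by (simp add: B0I_def)

lemma B0I_fsg: "finite_sg B0I"
  unfolding finite_sg_def semigroup_on_def B0I_def by (simp add: B0m)

lemma T1I_fsg: "finite_sg T1I"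
  unfolding finite_sg_def semigroup_on_def T1I_def bI by (simp add: B0m)

lemma T2I_fsg: "finite_sg T2I"
  unfolding finite_sg_def semigroup_on_def T2I_def bI by (simp add: B0m)

definition id1 :: "tm \<times> tm" where "id1 = (wd [0,1,0], wd [1,0,0])"
definition id2 :: "tm \<times> tm" where "id2 = (wd [0,1,0], wd [0,0,1])"

lemma T1I_id1: "T1I \<in> modl {id1}"
proof -
  have "sat T1I id1" unfolding id1_def
    by (rule sat_crit) (simp_all add: T1I_def bI f4_def B0m)
  then show ?thesis using T1I_fsg by (simp add: modl_def)
qed

lemma T2I_id2: "T2I \<in> modl {id2}"
proof -
  have "sat T2I id2" unfolding id2_def
    by (rule sat_crit) (simp_all add: T2I_def bI f4_def B0m)
  then show ?thesis using T2I_fsg by (simp add: modl_def)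
qed

lemma B0_not_id1: "\<not> sat (C, m) id1" if "(C, m) = B0 \<or> (C, m) = B0I" for C m
proof
  assume s: "sat (C, m) id1"
  have "3 \<in> C" "1 \<in> C" "0 \<in> C" using that by (auto simp: B0_def B0I_def)
  from sat_use[OF s[unfolded id1_def] this(1,2,3,3)] that show False
    by (auto simp: f4_def B0m B0_def B0I_def)
qed

lemma B0_not_id2: "\<not> sat (C, m) id2" if "(C, m) = B0 \<or> (C, m) = B0I" for C m
proof
  assume s: "sat (C, m) id2"
  have "2 \<in> C" "1 \<in> C" "0 \<in> C" using that by (auto simp: B0_def B0I_def)
  from sat_use[OF s[unfolded id2_def] this(1,2,3,3)] that show False
    by (auto simp: f4_def B0m B0_def B0I_def)
qed

definition mU :: "nat \<Rightarrow> nat \<Rightarrow> nat" where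
  "mU u v = 5 * snd B0I (u div 5) (v div 5) + snd B0I (u mod 5) (v mod 5)"

definition UU :: "nat sgrp" where "UU = ({0, 1, 5, 6, 13, 14, 23}, mU)"
definition UUI :: "nat sgrp" where "UUI = ({0, 1, 5, 6, 13, 14, 23, 24}, mU)"


lemma bI_le: "x \<le> 4 \<Longrightarrow> y \<le> 4 \<Longrightarrow> snd B0I x y \<le> 4"
  unfolding bI B0_mult_def by auto

lemma prod_sg: "semigroup_on S \<Longrightarrow> semigroup_on T \<Longrightarrow> semigroup_on (sg_prod S T)"
  unfolding semigroup_on_def sg_prod_def by auto

lemma sub_sg:
  assumes ne: "U \<noteq> {}" and cl: "\<forall>x\<in>U. \<forall>y\<in>U. m x y \<in> U"
    and hom: "sg_hom (U, m) P h" and inj: "inj_on h U" and sP: "semigroup_on P"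
  shows "semigroup_on (U, m)"
  unfolding semigroup_on_def fst_conv snd_conv
proof (intro conjI ne cl ballI)
  fix x y z assume xyz: "x \<in> U" "y \<in> U" "z \<in> U"
  have hU: "h a \<in> fst P" if "a \<in> U" for a using hom that unfolding sg_hom_def by auto
  have hm: "h (m a b) = snd P (h a) (h b)" if "a \<in> U" "b \<in> U" for a b
    using hom that unfolding sg_hom_def by auto
  have "h (m (m x y) z) = h (m x (m y z))"
    using xyz cl sP hU unfolding hm[OF cl[rule_format] ] semigroup_on_def
    by (simp add: hm)
  then show "m (m x y) z = m x (m y z)" using inj xyz cl by (meson inj_onD)
qed

definition hU :: "nat \<Rightarrow> nat \<times> nat" where "hU u = (u div 5, u mod 5)"

lemma hU_inj: "inj_on hU A"
proof (rule inj_onI)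
  fix x y assume "hU x = hU y"
  then have "x div 5 = y div 5" "x mod 5 = y mod 5" by (simp_all add: hU_def)
  then show "x = y" by (metis div_mult_mod_eq)
qed

lemma dm5: "B \<le> 4 \<Longrightarrow> (5 * A + B) div 5 = A \<and> (5 * A + B) mod 5 = (B::nat)"
  by presburger

lemma hU_hom:
  assumes S1: "fst S \<subseteq> {0, 1, 5, 6, 13, 14, 23, 24}" and S2: "snd S = mU"
  shows "sg_hom S (sg_prod T1I T2I) hU"
  unfolding sg_hom_def
proof (intro conjI ballI image_subsetI)
  fix x assume "x \<in> fst S"
  then have "x \<in> {0, 1, 5, 6, 13, 14, 23, 24}" using S1 by blast
  then show "hU x \<in> fst (sg_prod T1I T2I)"
    unfolding hU_def sg_prod_def T1I_def T2I_def fst_conv by (elim insertE emptyE; simp)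
next
  fix x y assume xy: "x \<in> fst S" "y \<in> fst S"
  have "x \<le> 24" "y \<le> 24" using xy S1 by auto
  then have "x div 5 \<le> 4" "y div 5 \<le> 4" by simp_all
  then have a: "snd B0I (x div 5) (y div 5) \<le> 4" by (rule bI_le)
  have b: "snd B0I (x mod 5) (y mod 5) \<le> 4" by (rule bI_le) simp_all
  have "hU (mU x y) = (snd B0I (x div 5) (y div 5), snd B0I (x mod 5) (y mod 5))"
    unfolding hU_def mU_def using dm5[OF b] by simp
  then show "hU (snd S x y) = snd (sg_prod T1I T2I) (hU x) (hU y)"
    using S2 by (simp add: hU_def sg_prod_def T1I_def T2I_def)
qed

lemma UU_cl: "\<forall>x\<in>fst UU. \<forall>y\<in>fst UU. snd UU x y \<in> fst UU"
  unfolding UU_def mU_def bI by (simp add: B0m)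

lemma UUI_cl: "\<forall>x\<in>fst UUI. \<forall>y\<in>fst UUI. snd UUI x y \<in> fst UUI"
  unfolding UUI_def mU_def bI by (simp add: B0m)

lemma UU_hom: "sg_hom UU (sg_prod T1I T2I) hU"
  by (rule hU_hom) (simp_all add: UU_def)

lemma UUI_hom: "sg_hom UUI (sg_prod T1I T2I) hU"
  by (rule hU_hom) (simp_all add: UUI_def)

lemma T12_sg: "semigroup_on (sg_prod T1I T2I)"
  using prod_sg T1I_fsg T2I_fsg unfolding finite_sg_def by blast

lemma UU_fsg: "finite_sg UU"
  using sub_sg[of "fst UU" "snd UU", OF _ UU_cl _ hU_inj T12_sg] UU_hom
  by (simp add: finite_sg_def UU_def)

lemma UUI_fsg: "finite_sg UUI"
  using sub_sg[of "fst UUI" "snd UUI", OF _ UUI_cl _ hU_inj T12_sg] UUI_hom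
  by (simp add: finite_sg_def UUI_def)

definition \<phi>U :: "nat \<Rightarrow> nat" where
  "\<phi>U u = (if u = 24 then 4 else if u = 14 then 2 else if u = 6 then 1 else if u = 23 then 3 else 0)"

lemma UU_B0: "sg_hom UU B0 \<phi>U \<and> \<phi>U ` fst UU = fst B0"
  unfolding sg_hom_def UU_def B0_def \<phi>U_def mU_def bI by (simp add: B0m insert_commute)

lemma UUI_B0I: "sg_hom UUI B0I \<phi>U \<and> \<phi>U ` fst UUI = fst B0I"
  unfolding sg_hom_def UUI_def B0I_def \<phi>U_def mU_def by (simp add: B0m insert_commute)


lemma pv_emb: "pseudovariety Q \<Longrightarrow> S \<in> Q \<Longrightarrow> T \<in> Q \<Longrightarrow> finite_sg U \<Longrightarrow>
    sg_hom U (sg_prod S T) h \<Longrightarrow> inj_on h (fst U) \<Longrightarrow> U \<in> Q"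
  unfolding pseudovariety_def by blast

lemma pv_img: "pseudovariety Q \<Longrightarrow> S \<in> Q \<Longrightarrow> finite_sg T \<Longrightarrow>
    sg_hom S T h \<Longrightarrow> h ` fst S = fst T \<Longrightarrow> T \<in> Q"
  unfolding pseudovariety_def by blast

lemma pv_fsg: "pseudovariety Q \<Longrightarrow> S \<in> Q \<Longrightarrow> finite_sg S"
  unfolding pseudovariety_def by blast

lemma div_in:
  fixes U :: "nat sgrp"
  assumes W: "pseudovariety W" "S \<in> W" "T \<in> W"
    and U: "finite_sg U" "sg_hom U (sg_prod S T) h" "inj_on h (fst U)"
    and B: "finite_sg B" "sg_hom U B \<phi>" "\<phi> ` fst U = fst B"
  shows "B \<in> W"
proof -
  have "U \<in> W" using pv_emb[OF W U] .
  then show ?thesis using pv_img[OF W(1) _ B(1,2,3)] by blast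
qed

lemma pv_gen_pv: assumes S: "finite_sg S" shows "pseudovariety (pv_gen S)"
proof -
  let ?F = "{Q. pseudovariety Q \<and> S \<in> Q}"
  have fin: "pseudovariety {T::nat sgrp. finite_sg T}"
    unfolding pseudovariety_def[of "{T::nat sgrp. finite_sg T}"]
  proof (intro conjI)
    show "{T::nat sgrp. finite_sg T} \<noteq> {}"
    proof
      assume "{T::nat sgrp. finite_sg T} = {}"
      then have "S \<in> {}" using S by (metis mem_Collect_eq)
      then show False by simp
    qed
  qed simp_all
  then have finF: "{T::nat sgrp. finite_sg T} \<in> ?F" using S by simp
  show ?thesis unfolding pseudovariety_def[of "pv_gen S"] unfolding pv_gen_def
  proof (intro conjI ballI allI impI)
    show "\<Inter>?F \<noteq> {}" by blast
  next
    fix T assume "T \<in> \<Inter>?F" then show "finite_sg T" using finF by blast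
  next
    fix S' T' U :: "nat sgrp" assume a: "S' \<in> \<Inter>?F" "T' \<in> \<Inter>?F"
      "finite_sg U \<and> (\<exists>h. sg_hom U (sg_prod S' T') h \<and> inj_on h (fst U))"
    then obtain h where h: "sg_hom U (sg_prod S' T') h" "inj_on h (fst U)" by blast
    show "U \<in> \<Inter>?F"
    proof
      fix Q assume Q: "Q \<in> ?F"
      then have "S' \<in> Q" "T' \<in> Q" "pseudovariety Q" using a(1,2) by auto
      then show "U \<in> Q" using pv_emb h a(3) by blast
    qed
  next
    fix S' T :: "nat sgrp" assume a: "S' \<in> \<Inter>?F" "finite_sg T \<and> (\<exists>h. sg_hom S' T h \<and> h ` fst S' = fst T)"
    then obtain h where h: "sg_hom S' T h" "h ` fst S' = fst T" by blast
    show "T \<in> \<Inter>?F"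
    proof
      fix Q assume Q: "Q \<in> ?F"
      then have "S' \<in> Q" "pseudovariety Q" using a(1) by auto
      then show "T \<in> Q" using pv_img h a(2) by blast
    qed
  qed
qed

lemma part2: "\<not> join_irreducible (pv_gen B0)"
proof -
  let ?X = "{modl {id1}, modl {id2}}"
  have pv: "\<forall>W\<in>?X. pseudovariety W" using modl_pv by auto
  have sub: "pv_gen B0 \<subseteq> pv_join ?X"
    unfolding pv_join_def
  proof (intro subsetI InterI)
    fix T W' assume T: "T \<in> pv_gen B0" and W': "W' \<in> {W. pseudovariety W \<and> \<Union>?X \<subseteq> W}"
    then have pW: "pseudovariety W'" and T1: "T1I \<in> W'" and T2: "T2I \<in> W'"
      using T1I_id1 T2I_id2 by auto
    have "B0 \<in> W'"
      using div_in[OF pW T1 T2 UU_fsg UU_hom hU_inj B0_fsg] UU_B0 by blast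
    then show "T \<in> W'" using pv_gen_least[OF pW] T by blast
  qed
  have n1: "B0 \<notin> modl {id1}" using B0_not_id1[of "fst B0" "snd B0"] by (simp add: modl_def)
  have n2: "B0 \<notin> modl {id2}" using B0_not_id2[of "fst B0" "snd B0"] by (simp add: modl_def)
  have "\<not> (\<exists>W\<in>?X. pv_gen B0 \<subseteq> W)" using n1 n2 in_pv_gen[of B0] by blast
  then show ?thesis unfolding join_irreducible_def using pv sub by blast
qed

lemma sub_B0I: assumes "T = (C, snd B0I)" "C \<subseteq> fst B0I" "finite_sg T"
  shows "T \<in> pv_gen B0I"
  unfolding pv_gen_def
proof
  fix Q assume Q: "Q \<in> {Q. pseudovariety Q \<and> B0I \<in> Q}"
  have "sg_hom T (sg_prod B0I B0I) (\<lambda>u. (u, u))"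
    using assms unfolding sg_hom_def sg_prod_def by auto
  moreover have "inj_on (\<lambda>u. (u, u)) (fst T)" by (auto simp: inj_on_def)
  ultimately show "T \<in> Q" using Q assms(3) pv_emb by blast
qed

lemma part3: "\<not> strictly_join_irreducible (pv_gen B0I)"
proof -
  let ?X = "{pv_gen T1I, pv_gen T2I}"
  have pv: "\<forall>W\<in>?X. pseudovariety W" using pv_gen_pv T1I_fsg T2I_fsg by auto
  have g1: "T1I \<in> pv_gen B0I" by (rule sub_B0I[OF _ _ T1I_fsg]) (auto simp: T1I_def B0I_def)
  have g2: "T2I \<in> pv_gen B0I" by (rule sub_B0I[OF _ _ T2I_fsg]) (auto simp: T2I_def B0I_def)
  have pB: "pseudovariety (pv_gen B0I)" by (rule pv_gen_pv[OF B0I_fsg])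
  have "\<Union>?X \<subseteq> pv_gen B0I" using pv_gen_least[OF pB g1] pv_gen_least[OF pB g2] by simp
  then have le: "pv_join ?X \<subseteq> pv_gen B0I" by (rule join_least[OF pB])
  have ge: "pv_gen B0I \<subseteq> pv_join ?X"
    unfolding pv_join_def
  proof (intro subsetI InterI)
    fix T W' assume T: "T \<in> pv_gen B0I" and W': "W' \<in> {W. pseudovariety W \<and> \<Union>?X \<subseteq> W}"
    then have pW: "pseudovariety W'" and T1: "T1I \<in> W'" and T2: "T2I \<in> W'"
      using in_pv_gen[of T1I] in_pv_gen[of T2I] by auto
    have "B0I \<in> W'"
      using div_in[OF pW T1 T2 UUI_fsg UUI_hom hU_inj B0I_fsg] UUI_B0I by blast
    then show "T \<in> W'" using pv_gen_least[OF pW] T by blast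
  qed
  have n1: "B0I \<notin> pv_gen T1I"
  proof
    assume "B0I \<in> pv_gen T1I"
    then have "B0I \<in> modl {id1}" using pv_gen_least[OF modl_pv T1I_id1] by blast
    then show False using B0_not_id1[of "fst B0I" "snd B0I"] by (simp add: modl_def)
  qed
  have n2: "B0I \<notin> pv_gen T2I"
  proof
    assume "B0I \<in> pv_gen T2I"
    then have "B0I \<in> modl {id2}" using pv_gen_least[OF modl_pv T2I_id2] by blast
    then show False using B0_not_id2[of "fst B0I" "snd B0I"] by (simp add: modl_def)
  qed
  have "pv_gen B0I \<notin> ?X" using n1 n2 in_pv_gen[of B0I] by auto
  then show ?thesis unfolding strictly_join_irreducible_def using pv le ge by blast
qed

theorem proposition3p1:
  shows "strictly_join_irreducible (pv_gen B0) \<and>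
         \<not> join_irreducible (pv_gen B0) \<and>
         \<not> strictly_join_irreducible (pv_gen B0I)"
  using part1 part2 part3 by blast

end
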